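(* For every $p\in[0,1]$ and $k\ge1$, there is a (randomized) Locate algorithm that runs in $k$ rounds, succeeds with probability $p$ on every input, and asks at most $p\,k\,n^{1/k}$ queries in expectation on any vector of length $n$.
   Context: Locate problem in the rank query model: there is a vector $\vec{x}=(x_1,\ldots,x_n)$ whose ranks form an unknown permutation of $\{1,\ldots,n\}$; an index $i$ is given and the goal is to output $\mathrm{rank}(x_i)$. Queries have the form "How is $\mathrm{rank}(x_j)$ compared to $m$?", with answer "$<$", "$=$" or "$>$". An algorithm runs in $k$ rounds if in each of $k$ rounds it submits a set of queries chosen depending only on answers of earlier rounds (and its randomness), then receives all answers. A randomized algorithm is a distribution over deterministic algorithms. *)

theory Defs
  imports "HOL-Probability.Probability"
begin

text \<open>Rank query model. The ranks of the input vector are given by a permutation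
  sigma of {1..n} (sigma j = rank of x_j). A query (j, m) asks how rank(x_j) compares to m.\<close>

datatype answer = ALess | AEq | AGreater

type_synonym query = "nat \<times> nat"
type_synonym history = "query \<Rightarrow> answer option"

definition ans :: "(nat \<Rightarrow> nat) \<Rightarrow> query \<Rightarrow> answer" where
  "ans \<sigma> q = (if \<sigma> (fst q) < snd q then ALess
               else if \<sigma> (fst q) = snd q then AEq else AGreater)"

text \<open>A deterministic round-based algorithm: in round r it submits the query set
  qs r h, where h records all answers received in earlier rounds; finally it outputs
  out h applied to all received answers.\<close>
record det_alg =
  qs :: "nat \<Rightarrow> history \<Rightarrow> query set"
  out :: "history \<Rightarrow> nat"

definition valid_alg :: "det_alg \<Rightarrow> bool" where
  "valid_alg A \<longleftrightarrow> (\<forall>r h. finite (qs A r h))"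

fun hist :: "det_alg \<Rightarrow> (nat \<Rightarrow> nat) \<Rightarrow> nat \<Rightarrow> history" where
  "hist A \<sigma> 0 = Map.empty"
| "hist A \<sigma> (Suc r) = hist A \<sigma> r ++
     (\<lambda>q. if q \<in> qs A r (hist A \<sigma> r) then Some (ans \<sigma> q) else None)"

definition result :: "det_alg \<Rightarrow> (nat \<Rightarrow> nat) \<Rightarrow> nat \<Rightarrow> nat" where
  "result A \<sigma> k = out A (hist A \<sigma> k)"

definition num_queries :: "det_alg \<Rightarrow> (nat \<Rightarrow> nat) \<Rightarrow> nat \<Rightarrow> nat" where
  "num_queries A \<sigma> k = (\<Sum>r<k. card (qs A r (hist A \<sigma> r)))"

end

theory Submission imports Defs begin

definition QQ :: "det_alg \<Rightarrow> (nat \<Rightarrow> nat) \<Rightarrow> nat \<Rightarrow> query set" where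
  "QQ A \<sigma> r = (\<Union>r'<r. qs A r' (hist A \<sigma> r'))"

lemma hist_char: "hist A \<sigma> r q = (if q \<in> QQ A \<sigma> r then Some (ans \<sigma> q) else None)"
proof (induction r arbitrary: q)
  case 0 then show ?case by (simp add: QQ_def)
next
  case (Suc r)
  have "QQ A \<sigma> (Suc r) = QQ A \<sigma> r \<union> qs A r (hist A \<sigma> r)"
    by (auto simp: QQ_def lessThan_Suc)
  then show ?case using Suc by (auto simp: map_add_def split: option.splits)
qed

lemma QQ_Suc: "QQ A \<sigma> (Suc r) = QQ A \<sigma> r \<union> qs A r (hist A \<sigma> r)"
  by (auto simp: QQ_def lessThan_Suc)

lemma QQ_finite: "valid_alg A \<Longrightarrow> finite (QQ A \<sigma> r)"
  by (auto simp: QQ_def valid_alg_def)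

definition lb :: "nat \<Rightarrow> history \<Rightarrow> nat" where
  "lb i h = Max (insert 0 {m - 1 | m. h (i,m) \<noteq> None \<and> h (i,m) \<noteq> Some ALess})"

definition SS where "SS A \<sigma> i r = {m - 1 | m. (i,m) \<in> QQ A \<sigma> r \<and> m \<le> \<sigma> i}"

lemma hist_pred: "(hist A \<sigma> r (i,m) \<noteq> None \<and> hist A \<sigma> r (i,m) \<noteq> Some ALess) = ((i,m) \<in> QQ A \<sigma> r \<and> m \<le> \<sigma> i)"
  unfolding hist_char ans_def by simp

lemma lb_hist: "lb i (hist A \<sigma> r) = Max (insert 0 (SS A \<sigma> i r))"
  unfolding lb_def SS_def hist_pred ..

lemma SS_finite: "valid_alg A \<Longrightarrow> finite (SS A \<sigma> i r)"
proof -
  assume v: "valid_alg A"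
  have e: "SS A \<sigma> i r = (\<lambda>m. m - 1) ` {m. (i,m) \<in> QQ A \<sigma> r \<and> m \<le> \<sigma> i}"
    unfolding SS_def by blast
  have "{m. (i,m) \<in> QQ A \<sigma> r \<and> m \<le> \<sigma> i} \<subseteq> snd ` QQ A \<sigma> r"
    by (auto intro: image_eqI[where x="(i, _)"])
  then have "finite {m. (i,m) \<in> QQ A \<sigma> r \<and> m \<le> \<sigma> i}"
    using QQ_finite[OF v] by (meson finite_imageI finite_subset)
  then show ?thesis unfolding e by simp
qed

definition alg :: "nat \<Rightarrow> nat \<Rightarrow> nat \<Rightarrow> det_alg" where
  "alg i k b = \<lparr>qs = (\<lambda>r h. (\<lambda>d. (i, lb i h + d * b ^ (k - Suc r) + 1)) ` {1..<b}),
                out = (\<lambda>h. lb i h + 1)\<rparr>"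

lemma qs_alg: "qs (alg i k b) r h = (\<lambda>d. (i, lb i h + d * b ^ (k - Suc r) + 1)) ` {1..<b}"
  by (simp add: alg_def)

lemma alg_valid: "valid_alg (alg i k b)"
  by (simp add: valid_alg_def alg_def)

lemma mult_le_div: "(y::nat) = c * w \<Longrightarrow> y \<le> x \<Longrightarrow> y \<le> x div w * w"
proof -
  assume "y = c * w" "y \<le> x"
  show ?thesis
  proof (cases "w = 0")
    case True then show ?thesis using \<open>y = c * w\<close> by simp
  next
    case False
    have "c \<le> x div w" using \<open>y = c*w\<close> \<open>y \<le> x\<close> False
      by (simp add: less_eq_div_iff_mult_less_eq)
    then show ?thesis using \<open>y = c*w\<close> by simp
  qed
qed

lemma invariant:
  assumes "r \<le> k" "\<sigma> i - 1 < b ^ k" "1 \<le> b" "1 \<le> \<sigma> i"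
  shows "lb i (hist (alg i k b) \<sigma> r) = (\<sigma> i - 1) div b ^ (k - r) * b ^ (k - r)"
  using assms(1)
proof (induction r)
  case 0
  have "SS (alg i k b) \<sigma> i 0 = {}" by (simp add: SS_def QQ_def)
  then show ?case using assms lb_hist[of i "alg i k b" \<sigma> 0] by simp
next
  case (Suc r)
  define x where "x = \<sigma> i - 1"
  define w where "w = b ^ (k - Suc r)"
  have kr0: "k - r = Suc (k - Suc r)" using Suc.prems by simp
  have kr: "b ^ (k - r) = w * b" unfolding kr0 w_def by (simp add: mult.commute)
  define base where "base = x div (w*b) * (w*b)"
  have IH: "lb i (hist (alg i k b) \<sigma> r) = base" using Suc by (simp add: kr base_def x_def)
  have fin: "finite (SS (alg i k b) \<sigma> i r)" by (rule SS_finite[OF alg_valid])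
  have IH2: "Max (insert 0 (SS (alg i k b) \<sigma> i r)) = base" using IH unfolding lb_hist .
  have qsr: "qs (alg i k b) r (hist (alg i k b) \<sigma> r) = (\<lambda>d. (i, base + d * w + 1)) ` {1..<b}"
    by (simp only: qs_alg IH w_def)
  have SSS: "SS (alg i k b) \<sigma> i (Suc r) = SS (alg i k b) \<sigma> i r \<union>
     {base + d * w | d. d \<in> {1..<b} \<and> base + d * w + 1 \<le> \<sigma> i}"
    unfolding SS_def QQ_Suc qsr by force
  define V where "V = x div w * w"
  have xdiv: "x div w = x div (w*b) * b + x div w mod b"
    by (simp add: div_mult2_eq)
  have Vb: "V = base + (x div w mod b) * w"
    unfolding V_def base_def by (subst xdiv) (simp add: algebra_simps)
  have Vx: "V \<le> x" unfolding V_def by simp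
  have mem: "V \<in> insert 0 (SS (alg i k b) \<sigma> i (Suc r))"
  proof (cases "x div w mod b = 0")
    case True
    then have "V = base" using Vb by simp
    then have "V \<in> insert 0 (SS (alg i k b) \<sigma> i r)"
      using IH2 Max_in[of "insert 0 (SS (alg i k b) \<sigma> i r)"] fin by simp
    then show ?thesis using SSS by auto
  next
    case False
    have "x div w mod b < b" using assms(3) by simp
    moreover have "base + (x div w mod b) * w + 1 \<le> \<sigma> i" using Vb Vx x_def assms(4) by linarith
    ultimately have "V \<in> {base + d * w | d. d \<in> {1..<b} \<and> base + d * w + 1 \<le> \<sigma> i}"
      using Vb False by auto
    then show ?thesis using SSS by blast
  qed
  have ub: "\<forall>y \<in> insert 0 (SS (alg i k b) \<sigma> i (Suc r)). y \<le> V"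
  proof
    fix y assume y: "y \<in> insert 0 (SS (alg i k b) \<sigma> i (Suc r))"
    have bV: "base \<le> V" using Vb by simp
    show "y \<le> V"
    proof (cases "y \<in> insert 0 (SS (alg i k b) \<sigma> i r)")
      case True
      then have "y \<le> base"
        using Max_ge[of "insert 0 (SS (alg i k b) \<sigma> i r)" y] fin IH2 by simp
      then show ?thesis using bV by simp
    next
      case False
      then obtain d where d: "y = base + d * w" "base + d * w + 1 \<le> \<sigma> i" using y SSS by auto
      have "y = (x div (w*b) * b + d) * w" using d(1) unfolding base_def by (simp add: algebra_simps)
      moreover have "y \<le> x" using d x_def by linarith
      ultimately show ?thesis unfolding V_def by (rule mult_le_div)
    qed
  qed
  have "lb i (hist (alg i k b) \<sigma> (Suc r)) = V"
    unfolding lb_hist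
    by (rule Max_eqI[OF _ _ mem]) (simp_all add: SS_finite[OF alg_valid] ub)
  then show ?case using Suc.prems by (simp add: V_def w_def x_def)
qed



definition A0 :: det_alg where "A0 = \<lparr>qs = (\<lambda>r h. {}), out = (\<lambda>h. 0)\<rparr>"

lemma main_bound:
  fixes k n :: nat
  assumes "k \<ge> 1" "n \<ge> 1"
  defines "t \<equiv> real n powr (1 / real k)"
  shows "real n < (real (nat \<lfloor>t\<rfloor> + 1)) ^ k" "real (k * nat \<lfloor>t\<rfloor>) \<le> real k * t"
proof -
  have tpos: "t > 0" using assms by (simp add: t_def)
  have tk: "t ^ k = real n" using assms unfolding t_def
    by (simp add: powr_realpow[symmetric] powr_powr)
  have "t < real (nat \<lfloor>t\<rfloor> + 1)" using tpos by linarith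
  then have "t ^ k < (real (nat \<lfloor>t\<rfloor> + 1)) ^ k"
    using tpos assms(1) by (intro power_strict_mono) auto
  then show "real n < (real (nat \<lfloor>t\<rfloor> + 1)) ^ k" using tk by simp
  have "real (nat \<lfloor>t\<rfloor>) \<le> t" using tpos by linarith
  then show "real (k * nat \<lfloor>t\<rfloor>) \<le> real k * t" by (simp add: mult_left_mono)
qed

lemma num_queries_alg: "num_queries (alg i k b) \<sigma> k \<le> k * (b - 1)"
proof -
  have "num_queries (alg i k b) \<sigma> k \<le> (\<Sum>r<k. b - 1)"
    unfolding num_queries_def
  proof (rule sum_mono)
    fix r assume "r \<in> {..<k}"
    show "card (qs (alg i k b) r (hist (alg i k b) \<sigma> r)) \<le> b - 1"
      unfolding alg_def using card_image_le[of "{1..<b}"] by simp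
  qed
  then show ?thesis by simp
qed

lemma result_alg:
  assumes "\<sigma> i - 1 < b ^ k" "1 \<le> b" "\<sigma> i \<ge> 1"
  shows "result (alg i k b) \<sigma> k = \<sigma> i"
  using invariant[of k k \<sigma> i b] assms
  by (simp add: result_def alg_def)


theorem proposition2:
  fixes p :: real and k n i :: nat
  assumes "0 \<le> p" "p \<le> 1" "k \<ge> 1" "i \<in> {1..n}"
  shows "\<exists>D :: det_alg pmf. (\<forall>A\<in>set_pmf D. valid_alg A) \<and>
           (\<forall>\<sigma>. \<sigma> permutes {1..n} \<longrightarrow>
              measure_pmf.prob D {A. result A \<sigma> k = \<sigma> i} = p \<and>
              (\<integral>\<^sup>+ A. ennreal (real (num_queries A \<sigma> k)) \<partial>(measure_pmf D))
                 \<le> ennreal (p * real k * real n powr (1 / real k)))"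
proof -
  have n1: "n \<ge> 1" using assms(4) by simp
  define t where "t = real n powr (1 / real k)"
  define b where "b = nat \<lfloor>t\<rfloor> + 1"
  have bn: "real n < real b ^ k" using main_bound(1)[OF assms(3) n1] by (simp add: b_def t_def)
  have bq: "real (k * (b - 1)) \<le> real k * t" using main_bound(2)[OF assms(3) n1] by (simp add: b_def t_def)
  have bn': "n < b ^ k" using bn by (metis of_nat_less_iff of_nat_power)
  define A1 where "A1 = alg i k b"
  define D where "D = map_pmf (\<lambda>c. if c then A1 else A0) (bernoulli_pmf p)"
  have v0: "valid_alg A0" by (simp add: valid_alg_def A0_def)
  have "\<forall>A\<in>set_pmf D. valid_alg A"
    using v0 alg_valid by (auto simp: D_def A1_def)
  moreover have "measure_pmf.prob D {A. result A \<sigma> k = \<sigma> i} = p \<and>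
              (\<integral>\<^sup>+ A. ennreal (real (num_queries A \<sigma> k)) \<partial>(measure_pmf D))
                 \<le> ennreal (p * real k * real n powr (1 / real k))"
    if s: "\<sigma> permutes {1..n}" for \<sigma>
  proof
    have si: "\<sigma> i \<in> {1..n}" using permutes_in_image[OF s] assms(4) by blast
    have r1: "result A1 \<sigma> k = \<sigma> i" unfolding A1_def
      by (rule result_alg) (use si bn' b_def in auto)
    have r0: "result A0 \<sigma> k \<noteq> \<sigma> i" using si by (simp add: result_def A0_def)
    have "(\<lambda>c. if c then A1 else A0) -` {A. result A \<sigma> k = \<sigma> i} = {True}"
      using r1 r0 by auto
    then show "measure_pmf.prob D {A. result A \<sigma> k = \<sigma> i} = p"
      using assms(1,2) by (simp add: D_def measure_pmf_single)
    have q0: "num_queries A0 \<sigma> k = 0" by (simp add: num_queries_def A0_def)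
    have q1: "real (num_queries A1 \<sigma> k) \<le> real k * t"
      using num_queries_alg[of i k b \<sigma>] bq unfolding A1_def by (meson of_nat_le_iff order_trans)
    have "(\<integral>\<^sup>+ A. ennreal (real (num_queries A \<sigma> k)) \<partial>(measure_pmf D))
        = ennreal (real (num_queries A1 \<sigma> k)) * ennreal p"
      using assms(1,2) q0 by (simp add: D_def)
    also have "\<dots> = ennreal (real (num_queries A1 \<sigma> k) * p)"
      using assms(1) by (simp add: ennreal_mult)
    also have "\<dots> \<le> ennreal (p * real k * t)"
    proof (intro ennreal_leI)
      have "real (num_queries A1 \<sigma> k) * p \<le> (real k * t) * p"
        using q1 assms(1) by (rule mult_right_mono)
      then show "real (num_queries A1 \<sigma> k) * p \<le> p * real k * t" by (simp add: algebra_simps)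
    qed
    finally show "(\<integral>\<^sup>+ A. ennreal (real (num_queries A \<sigma> k)) \<partial>(measure_pmf D))
                 \<le> ennreal (p * real k * real n powr (1 / real k))" by (simp add: t_def)
  qed
  ultimately show ?thesis by blast
qed

end
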